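(* In the changepoint model of the context, for $0<i\le n$, $$\tilde q_i=\sum_{\ell=i}^{n-1}\tilde c_{i\ell}\,\tilde q_{\ell+1}+\tilde c_{in}.$$
   Context: Model: Let $n\ge 1$ and fix observed data $y_1,\dots,y_n$. Let $(\mathbb X,\mathcal X)$, $(\mathbb Y,\mathcal Y)$ be standard Borel spaces, $\psi$ a $\sigma$-finite measure on $(\mathbb Y,\mathcal Y)$, $\mathcal J$ a probability measure on $(\mathbb X,\mathcal X)$, and $q_{ji}\in[0,1]$ for $0\le j<i\le n$. The model consists of random variables $C_i\in\{0,\dots,i\}$, $X_i\in\mathbb X$, $Y_i\in\mathbb Y$, $i=1,\dots,n$, with joint law factorizing as: $P(C_1=0)=q_{01}$, $P(C_1=1)=1-q_{01}$; for $i\ge2$, $C_i$ depends on the past only through $C_{i-1}$, with $P(C_i=j\mid C_{i-1}=j)=q_{ji}$ and $P(C_i=i\mid C_{i-1}=j)=1-q_{ji}$ ($0\le j\le i-1$); $X_1\sim\mathcal J$ independent of $C_1$; for $i\ge 2$, $X_i$ depends on the past only through $(C_i,X_{i-1})$, with $X_i\sim\mathcal J$ if $C_i=i$ and $X_i=X_{i-1}$ if $C_i<i$; $Y_i$ depends on all other variables only through $X_i$, with density $p(Y_i=y\mid X_i=x)$ w.r.t. $\psi$. Assume $\int\prod_{\ell=j}^i p(Y_\ell=y_\ell\mid X_\ell=x)\,\mathcal J(dx)>0$ for all $0<j\le i\le n$. $Y_{a:b}=y_{a:b}$ abbreviates $Y_a=y_a,\dots,Y_b=y_b$. Notation: $\tilde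 c_{ji}=P(C_i=j\mid C_{i+1}=i+1,Y_{1:i}=y_{1:i})$ for $0<i<n$, and $\tilde c_{jn}=P(C_n=j\mid Y_{1:n}=y_{1:n})$; $\tilde q_i=P(C_i=i\mid Y_{1:n}=y_{1:n})$. *)

theory Defs
  imports "HOL-Probability.Probability"
begin

text \<open>A changepoint path is a function c with c i = C_i for
  i in {1..n}, c i \<le> i, and c i = 0 outside {1..n} (in particular c 0 = 0,
  which makes the law of C_1 a special case of the general transition).\<close>

definition cpaths :: "nat \<Rightarrow> (nat \<Rightarrow> nat) set" where
  "cpaths n = {c. (\<forall>i\<in>{1..n}. c i \<le> i) \<and> (\<forall>i. i \<notin> {1..n} \<longrightarrow> c i = 0)}"

text \<open>Transition probability P(C_i = k | C_{i-1} = j).\<close>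
definition ctrans :: "(nat \<Rightarrow> nat \<Rightarrow> real) \<Rightarrow> nat \<Rightarrow> nat \<Rightarrow> nat \<Rightarrow> real" where
  "ctrans q i j k = (if k = i then 1 - q j i else if k = j then q j i else 0)"

definition cprior :: "(nat \<Rightarrow> nat \<Rightarrow> real) \<Rightarrow> nat \<Rightarrow> (nat \<Rightarrow> nat) \<Rightarrow> real" where
  "cprior q n c = (\<Prod>i\<in>{1..n}. ctrans q i (c (i - 1)) (c i))"

fun xpath :: "(nat \<Rightarrow> nat) \<Rightarrow> (nat \<Rightarrow> 'x) \<Rightarrow> nat \<Rightarrow> 'x" where
  "xpath c z 0 = z 0"
| "xpath c z (Suc i) = (if i = 0 \<or> c (Suc i) = Suc i then z (Suc i) else xpath c z i)"

text \<open>Likelihood (density w.r.t. psi^m) of Y_{1:m} = y_{1:m} given C_{1:n} = c.\<close>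
definition cplik :: "'x measure \<Rightarrow> (nat \<Rightarrow> 'x \<Rightarrow> 'y \<Rightarrow> real) \<Rightarrow> (nat \<Rightarrow> 'y)
    \<Rightarrow> nat \<Rightarrow> nat \<Rightarrow> (nat \<Rightarrow> nat) \<Rightarrow> real" where
  "cplik J p y n m c =
     (\<integral>z. (\<Prod>l\<in>{1..m}. p l (xpath c z l) (y l)) \<partial>(PiM {1..n} (\<lambda>_. J)))"

text \<open>Joint density of the event {C_{1:n} satisfies E} together with Y_{1:m} = y_{1:m}.\<close>
definition cpdens :: "'x measure \<Rightarrow> (nat \<Rightarrow> 'x \<Rightarrow> 'y \<Rightarrow> real) \<Rightarrow> (nat \<Rightarrow> 'y)
    \<Rightarrow> (nat \<Rightarrow> nat \<Rightarrow> real) \<Rightarrow> nat \<Rightarrow> nat \<Rightarrow> ((nat \<Rightarrow> nat) \<Rightarrow> bool) \<Rightarrow> real" where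
  "cpdens J p y q n m E =
     (\<Sum>c\<in>cpaths n. if E c then cprior q n c * cplik J p y n m c else 0)"

definition qtilde :: "'x measure \<Rightarrow> (nat \<Rightarrow> 'x \<Rightarrow> 'y \<Rightarrow> real) \<Rightarrow> (nat \<Rightarrow> 'y)
    \<Rightarrow> (nat \<Rightarrow> nat \<Rightarrow> real) \<Rightarrow> nat \<Rightarrow> nat \<Rightarrow> real" where
  "qtilde J p y q n i = cpdens J p y q n n (\<lambda>c. c i = i) / cpdens J p y q n n (\<lambda>_. True)"

text \<open>c~_{ji} = P(C_i = j | C_{i+1} = i+1, Y_{1:i} = y_{1:i}) for i < n,
  and c~_{jn} = P(C_n = j | Y_{1:n} = y_{1:n}).\<close>
definition ctilde :: "'x measure \<Rightarrow> (nat \<Rightarrow> 'x \<Rightarrow> 'y \<Rightarrow> real) \<Rightarrow> (nat \<Rightarrow> 'y)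
    \<Rightarrow> (nat \<Rightarrow> nat \<Rightarrow> real) \<Rightarrow> nat \<Rightarrow> nat \<Rightarrow> nat \<Rightarrow> real" where
  "ctilde J p y q n j i =
     (if i < n then cpdens J p y q n i (\<lambda>c. c i = j \<and> c (Suc i) = Suc i)
                    / cpdens J p y q n i (\<lambda>c. c (Suc i) = Suc i)
      else cpdens J p y q n n (\<lambda>c. c n = j) / cpdens J p y q n n (\<lambda>_. True))"

end

theory Submission
  imports Defs
begin

fun st :: "(nat \<Rightarrow> nat) \<Rightarrow> nat \<Rightarrow> nat" where
  "st c 0 = 0"
| "st c (Suc i) = (if i = 0 \<or> c (Suc i) = Suc i then Suc i else st c i)"

lemma xpath_st: "xpath c z l = z (st c l)"
  by (induction l) auto

lemma st_range: "1 \<le> l \<Longrightarrow> 1 \<le> st c l \<and> st c l \<le> l"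
proof (induction l)
  case 0 then show ?case by simp
next
  case (Suc l) then show ?case by (cases "l = 0") auto
qed

definition Kf :: "'x measure \<Rightarrow> (nat \<Rightarrow> 'x \<Rightarrow> 'y \<Rightarrow> real) \<Rightarrow> (nat \<Rightarrow> 'y)
    \<Rightarrow> nat \<Rightarrow> (nat \<Rightarrow> nat) \<Rightarrow> nat \<Rightarrow> ennreal" where
  "Kf J p y m c k = (\<integral>\<^sup>+ x. ennreal (\<Prod>l\<in>{l\<in>{1..m}. st c l = k}. p l x (y l)) \<partial>J)"

lemma lik_closed:
  assumes J: "prob_space J" and m: "m \<le> n"
  and meas: "\<And>l. l \<in> {1..m} \<Longrightarrow> (\<lambda>x. p l x (y l)) \<in> borel_measurable J"
  and nn: "\<And>l x. l \<in> {1..m} \<Longrightarrow> x \<in> space J \<Longrightarrow> 0 \<le> p l x (y l)"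
  shows "cplik J p y n m c = enn2real (\<Prod>k\<in>{1..n}. Kf J p y m c k)"
proof -
  interpret product_sigma_finite "\<lambda>_. J"
    using J by (simp add: product_sigma_finite_def prob_space_imp_sigma_finite)
  define G where "G = (\<lambda>k x. \<Prod>l\<in>{l\<in>{1..m}. st c l = k}. p l x (y l))"
  have img: "st c ` {1..m} \<subseteq> {1..n}" using st_range m by fastforce
  have eq1: "(\<Prod>l\<in>{1..m}. p l (xpath c z l) (y l)) = (\<Prod>k\<in>{1..n}. G k (z k))" for z
    unfolding xpath_st G_def
    using prod.group[OF _ _ img, of "\<lambda>l. p l (z (st c l)) (y l)"]
    by (simp add: prod.group[OF _ _ img])
  have Gm: "G k \<in> borel_measurable J" for k
    unfolding G_def using meas by (intro borel_measurable_prod) auto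
  have Gnn: "0 \<le> G k x" if "x \<in> space J" for k x
    unfolding G_def using nn that by (intro prod_nonneg) auto
  have mz: "(\<lambda>z. \<Prod>k\<in>{1..n}. G k (z k)) \<in> borel_measurable (PiM {1..n} (\<lambda>_. J))"
    using Gm by (intro borel_measurable_prod) (auto intro: measurable_comp[OF measurable_component_singleton])
  have sp: "z \<in> space (PiM {1..n} (\<lambda>_. J)) \<Longrightarrow> k \<in> {1..n} \<Longrightarrow> z k \<in> space J" for z k
    by (auto simp: space_PiM)
  have "cplik J p y n m c = integral\<^sup>L (PiM {1..n} (\<lambda>_. J)) (\<lambda>z. \<Prod>k\<in>{1..n}. G k (z k))"
    unfolding cplik_def eq1 ..
  also have "\<dots> = enn2real (\<integral>\<^sup>+z. ennreal (\<Prod>k\<in>{1..n}. G k (z k)) \<partial>PiM {1..n} (\<lambda>_. J))"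
    by (rule integral_eq_nn_integral[OF mz]) (auto intro!: AE_I2 prod_nonneg Gnn sp)
  also have "(\<integral>\<^sup>+z. ennreal (\<Prod>k\<in>{1..n}. G k (z k)) \<partial>PiM {1..n} (\<lambda>_. J))
     = (\<integral>\<^sup>+z. (\<Prod>k\<in>{1..n}. ennreal (G k (z k))) \<partial>PiM {1..n} (\<lambda>_. J))"
    by (intro nn_integral_cong, subst prod_ennreal) (auto simp: Gnn sp)
  also have "\<dots> = (\<Prod>k\<in>{1..n}. \<integral>\<^sup>+x. ennreal (G k x) \<partial>J)"
    using Gm by (intro product_nn_integral_prod) auto
  finally show ?thesis by (simp add: Kf_def G_def)
qed


lemma st_le: "st c l \<le> l"
  by (induction l) auto

lemma st_eq_prefix: "(\<forall>j\<le>l. c j = c' j) \<Longrightarrow> st c l = st c' l"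
  by (induction l) auto

lemma st_ge: "c (Suc L) = Suc L \<Longrightarrow> L < l \<Longrightarrow> Suc L \<le> st c l"
proof (induction l)
  case 0 then show ?case by simp
next
  case (Suc l) then show ?case by (cases "l = L") auto
qed

lemma st_eq_suffix: "c (Suc L) = Suc L \<Longrightarrow> c' (Suc L) = Suc L \<Longrightarrow>
   (\<forall>j. Suc L \<le> j \<and> j \<le> l \<longrightarrow> c j = c' j) \<Longrightarrow> L < l \<Longrightarrow> st c l = st c' l"
proof (induction l)
  case 0 then show ?case by simp
next
  case (Suc l) then show ?case by (cases "l = L") auto
qed

definition mixp :: "nat \<Rightarrow> (nat \<Rightarrow> nat) \<Rightarrow> (nat \<Rightarrow> nat) \<Rightarrow> nat \<Rightarrow> nat" where
  "mixp L c c' = (\<lambda>k. if k \<le> L then c k else c' k)"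

definition X1 :: "'x measure \<Rightarrow> (nat \<Rightarrow> 'x \<Rightarrow> 'y \<Rightarrow> real) \<Rightarrow> (nat \<Rightarrow> 'y)
    \<Rightarrow> nat \<Rightarrow> (nat \<Rightarrow> nat) \<Rightarrow> ennreal" where
  "X1 J p y L c = (\<Prod>k\<in>{1..L}. Kf J p y L c k)"

definition X2 :: "'x measure \<Rightarrow> (nat \<Rightarrow> 'x \<Rightarrow> 'y \<Rightarrow> real) \<Rightarrow> (nat \<Rightarrow> 'y)
    \<Rightarrow> nat \<Rightarrow> nat \<Rightarrow> (nat \<Rightarrow> nat) \<Rightarrow> ennreal" where
  "X2 J p y n L c = (\<Prod>k\<in>{Suc L..n}. Kf J p y n c k)"

lemma X1_mix: "X1 J p y L (mixp L c c') = X1 J p y L c"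
proof -
  have "st (mixp L c c') l = st c l" if "l \<le> L" for l
    using that by (intro st_eq_prefix) (auto simp: mixp_def)
  then have "Kf J p y L (mixp L c c') k = Kf J p y L c k" for k
    unfolding Kf_def by (intro nn_integral_cong arg_cong[where f=ennreal] prod.cong) auto
  then show ?thesis by (simp add: X1_def)
qed

lemma X2_mix:
  assumes "c (Suc L) = Suc L"
  shows "X2 J p y n L (mixp L c' c) = X2 J p y n L c"
proof -
  have "(st (mixp L c' c) l = k) = (st c l = k)" if "Suc L \<le> k" for l k
  proof (cases "l \<le> L")
    case True
    then show ?thesis using st_le[of c l] st_le[of "mixp L c' c" l] that by auto
  next
    case False
    then show ?thesis using assms by (subst st_eq_suffix[of "mixp L c' c" L c]) (auto simp: mixp_def)
  qed
  then have "Kf J p y n (mixp L c' c) k = Kf J p y n c k" if "Suc L \<le> k" for k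
    unfolding Kf_def using that by (intro nn_integral_cong arg_cong[where f=ennreal] prod.cong) auto
  then show ?thesis by (simp add: X2_def)
qed

lemma prod_split_nat:
  fixes f :: "nat \<Rightarrow> 'a::comm_monoid_mult"
  assumes "L \<le> n"
  shows "(\<Prod>k\<in>{1..n}. f k) = (\<Prod>k\<in>{1..L}. f k) * (\<Prod>k\<in>{Suc L..n}. f k)"
proof -
  have "{1..n} = {1..L} \<union> {Suc L..n}" using assms by auto
  then show ?thesis by (simp add: prod.union_disjoint ivl_disj_int)
qed

lemma lik_split:
  assumes J: "prob_space J" and L: "L < n" and cL: "c (Suc L) = Suc L"
  and meas: "\<And>l. l \<in> {1..n} \<Longrightarrow> (\<lambda>x. p l x (y l)) \<in> borel_measurable J"
  and nn: "\<And>l x. l \<in> {1..n} \<Longrightarrow> x \<in> space J \<Longrightarrow> 0 \<le> p l x (y l)"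
  shows "cplik J p y n n c = enn2real (X1 J p y L c) * enn2real (X2 J p y n L c)"
    and "cplik J p y n L c = enn2real (X1 J p y L c)"
proof -
  have a: "Kf J p y n c k = Kf J p y L c k" if "k \<le> L" for k
  proof -
    have "{l\<in>{1..n}. st c l = k} = {l\<in>{1..L}. st c l = k}"
      using st_ge[of c L] cL that L by (auto, meson not_less_eq_eq order_trans not_le)
    then show ?thesis by (simp add: Kf_def)
  qed
  have b: "Kf J p y L c k = 1" if "Suc L \<le> k" for k
  proof -
    have E: "{l\<in>{1..L}. st c l = k} = {}" using st_le[of c] that by (auto, meson le_trans not_less_eq_eq)
    show ?thesis unfolding Kf_def E using prob_space.emeasure_space_1[OF J] by simp
  qed
  have "cplik J p y n n c = enn2real (\<Prod>k\<in>{1..n}. Kf J p y n c k)"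
    using lik_closed[OF J, where m=n and n=n and p=p and y=y and c=c] meas nn by auto
  also have "\<dots> = enn2real (X1 J p y L c * X2 J p y n L c)"
    using L a unfolding prod_split_nat[of L n "Kf J p y n c", OF less_imp_le[OF L]] X1_def X2_def
    by (metis (no_types, lifting) atLeastAtMost_iff prod.cong)
  finally show "cplik J p y n n c = enn2real (X1 J p y L c) * enn2real (X2 J p y n L c)"
    by (simp add: enn2real_mult)
  have "cplik J p y n L c = enn2real (\<Prod>k\<in>{1..n}. Kf J p y L c k)"
    using lik_closed[OF J, where m=L and n=n and p=p and y=y and c=c] meas nn L by auto
  also have "\<dots> = enn2real (X1 J p y L c)"
    using L b unfolding prod_split_nat[of L n "Kf J p y L c", OF less_imp_le[OF L]] X1_def
    by simp
  finally show "cplik J p y n L c = enn2real (X1 J p y L c)" .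
qed


definition Pa :: "(nat \<Rightarrow> nat \<Rightarrow> real) \<Rightarrow> nat \<Rightarrow> (nat \<Rightarrow> nat) \<Rightarrow> real" where
  "Pa q L c = (\<Prod>k\<in>{1..Suc L}. ctrans q k (c (k - 1)) (c k))"

definition Pb :: "(nat \<Rightarrow> nat \<Rightarrow> real) \<Rightarrow> nat \<Rightarrow> nat \<Rightarrow> (nat \<Rightarrow> nat) \<Rightarrow> real" where
  "Pb q n L c = (\<Prod>k\<in>{Suc (Suc L)..n}. ctrans q k (c (k - 1)) (c k))"

lemma prior_split: "L < n \<Longrightarrow> cprior q n c = Pa q L c * Pb q n L c"
  unfolding cprior_def Pa_def Pb_def by (rule prod_split_nat) simp

lemma Pa_mix: "c (Suc L) = c' (Suc L) \<Longrightarrow> Pa q L (mixp L c c') = Pa q L c"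
  unfolding Pa_def
  by (intro prod.cong refl) (auto simp: mixp_def le_Suc_eq)

lemma Pb_mix: "Pb q n L (mixp L c c') = Pb q n L c'"
  unfolding Pb_def
  by (intro prod.cong refl) (auto simp: mixp_def)

lemma finite_cpaths: "finite (cpaths n)"
proof -
  have "cpaths n \<subseteq> {f. \<forall>x. (x \<in> {1..n} \<longrightarrow> f x \<in> {0..n}) \<and> (x \<notin> {1..n} \<longrightarrow> f x = 0)}"
    unfolding cpaths_def by (auto, meson atLeastAtMost_iff le_trans)
  then show ?thesis by (rule finite_subset) (intro finite_set_of_finite_funs; simp)
qed

lemma cpdens_sum: "cpdens J p y q n m E = (\<Sum>c\<in>{c\<in>cpaths n. E c}. cprior q n c * cplik J p y n m c)"
  unfolding cpdens_def by (simp add: sum.inter_filter[OF finite_cpaths])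

lemma cross:
  assumes J: "prob_space J" and L: "L < n"
  and meas: "\<And>l. l \<in> {1..n} \<Longrightarrow> (\<lambda>x. p l x (y l)) \<in> borel_measurable J"
  and nn: "\<And>l x. l \<in> {1..n} \<Longrightarrow> x \<in> space J \<Longrightarrow> 0 \<le> p l x (y l)"
  shows "cpdens J p y q n n (\<lambda>c. c L = i \<and> c (Suc L) = Suc L) * cpdens J p y q n L (\<lambda>c. c (Suc L) = Suc L)
       = cpdens J p y q n L (\<lambda>c. c L = i \<and> c (Suc L) = Suc L) * cpdens J p y q n n (\<lambda>c. c (Suc L) = Suc L)"
proof -
  define SA where "SA = {c\<in>cpaths n. c L = i \<and> c (Suc L) = Suc L}"
  define SB where "SB = {c\<in>cpaths n. c (Suc L) = Suc L}"
  define W where "W = (\<lambda>m c. cprior q n c * cplik J p y n m c)"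
  define sw where "sw = (\<lambda>(c, c'). (mixp L c c', mixp L c' c))"
  have finA: "finite SA" and finB: "finite SB" unfolding SA_def SB_def using finite_cpaths by auto
  have Wn: "W n c = Pa q L c * Pb q n L c * (enn2real (X1 J p y L c) * enn2real (X2 J p y n L c))"
    and WL: "W L c = Pa q L c * Pb q n L c * enn2real (X1 J p y L c)"
    if "c (Suc L) = Suc L" for c
    unfolding W_def using lik_split[where c=c and p=p and y=y and L=L, OF J L that] meas nn prior_split[OF L] by auto
  have key: "W L (mixp L c c') * W n (mixp L c' c) = W n c * W L c'"
    if "c \<in> SA" "c' \<in> SB" for c c'
  proof -
    have c1: "c (Suc L) = Suc L" and c2: "c' (Suc L) = Suc L" using that by (auto simp: SA_def SB_def)
    have m1: "mixp L c c' (Suc L) = Suc L" and m2: "mixp L c' c (Suc L) = Suc L"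
      using c1 c2 by (auto simp: mixp_def)
    show ?thesis
      unfolding Wn[where c="mixp L c' c", OF m2] WL[where c="mixp L c c'", OF m1] Wn[where c=c, OF c1] WL[where c=c', OF c2]
      using Pa_mix[of c L c' q] Pa_mix[of c' L c q] c1 c2
      by (simp add: Pb_mix X1_mix X2_mix[where c=c and L=L, OF c1])
  qed
  have mem: "sw x \<in> SA \<times> SB" if "x \<in> SA \<times> SB" for x
    using that unfolding sw_def SA_def SB_def cpaths_def by (auto simp: mixp_def)
  have inv: "sw (sw x) = x" for x
    unfolding sw_def by (auto simp: mixp_def fun_eq_iff split: prod.splits)
  have "cpdens J p y q n n (\<lambda>c. c L = i \<and> c (Suc L) = Suc L) * cpdens J p y q n L (\<lambda>c. c (Suc L) = Suc L)
      = (\<Sum>c\<in>SA. W n c) * (\<Sum>c'\<in>SB. W L c')"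
    unfolding cpdens_sum SA_def SB_def W_def ..
  also have "\<dots> = (\<Sum>(c, c')\<in>SA \<times> SB. W n c * W L c')"
    by (simp add: sum_product sum.cartesian_product)
  also have "\<dots> = (\<Sum>(d, d')\<in>SA \<times> SB. W L d * W n d')"
    by (rule sum.reindex_bij_witness[where i=sw and j=sw])
       (auto simp: inv mem, auto simp: sw_def key)
  also have "\<dots> = (\<Sum>c\<in>SA. W L c) * (\<Sum>c'\<in>SB. W n c')"
    by (simp add: sum_product sum.cartesian_product)
  also have "\<dots> = cpdens J p y q n L (\<lambda>c. c L = i \<and> c (Suc L) = Suc L) * cpdens J p y q n n (\<lambda>c. c (Suc L) = Suc L)"
    unfolding cpdens_sum SA_def SB_def W_def ..
  finally show ?thesis .
qed


lemma prior_nonneg: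
  assumes qb: "\<forall>j i. j < i \<and> i \<le> n \<longrightarrow> 0 \<le> q j i \<and> q j i \<le> 1" and c: "c \<in> cpaths n"
  shows "0 \<le> cprior q n c"
  unfolding cprior_def
proof (intro prod_nonneg)
  fix k assume k: "k \<in> {1..n}"
  have "c (k - 1) < k"
  proof (cases "k = 1")
    case True then show ?thesis using c by (auto simp: cpaths_def)
  next
    case False then have "c (k - 1) \<le> k - 1" using c k by (auto simp: cpaths_def)
    then show ?thesis using k by auto
  qed
  then show "0 \<le> ctrans q k (c (k - 1)) (c k)"
    using qb k by (auto simp: ctrans_def)
qed

lemma valid_of_prior:
  assumes "cprior q n c \<noteq> 0" "k \<in> {1..n}"
  shows "c k = k \<or> c k = c (k - 1)"
proof (rule ccontr)
  assume "\<not> ?thesis"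
  then have "ctrans q k (c (k - 1)) (c k) = 0" by (auto simp: ctrans_def)
  then have "cprior q n c = 0" unfolding cprior_def using assms(2) by (intro prod_zero) auto
  then show False using assms(1) by simp
qed

lemma partition_path:
  assumes c: "c \<in> cpaths n" and valid: "\<forall>k\<in>{1..n}. c k = k \<or> c k = c (k - 1)"
    and i: "1 \<le> i" and im: "i \<le> m" and mn: "m \<le> n"
  shows "(if c i = i then w else 0) = (\<Sum>l\<in>{i..<m}. if c l = i \<and> c (Suc l) = Suc l then w else (0::real))
           + (if c m = i then w else 0)"
  using im mn
proof (induction m rule: dec_induct)
  case base then show ?case by simp
next
  case (step m)
  have cm: "c m \<le> m" using c step i by (auto simp: cpaths_def)
  have v: "c (Suc m) = Suc m \<or> c (Suc m) = c m" using valid step by fastforce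
  have "(\<Sum>l\<in>{i..<Suc m}. if c l = i \<and> c (Suc l) = Suc l then w else (0::real))
     = (\<Sum>l\<in>{i..<m}. if c l = i \<and> c (Suc l) = Suc l then w else (0::real))
       + (if c m = i \<and> c (Suc m) = Suc m then w else 0)"
    using step by simp
  moreover have "(if c m = i \<and> c (Suc m) = Suc m then w else 0) + (if c (Suc m) = i then w else 0)
     = (if c m = i then w else 0)"
    using v cm step by auto
  ultimately show ?case using step by simp
qed

lemma ctilde_step:
  assumes J: "prob_space J" and L: "L < n"
  and meas: "\<And>l. l \<in> {1..n} \<Longrightarrow> (\<lambda>x. p l x (y l)) \<in> borel_measurable J"
  and nn: "\<And>l x. l \<in> {1..n} \<Longrightarrow> x \<in> space J \<Longrightarrow> 0 \<le> p l x (y l)"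
  and qb: "\<forall>j i. j < i \<and> i \<le> n \<longrightarrow> 0 \<le> q j i \<and> q j i \<le> 1"
  shows "cpdens J p y q n L (\<lambda>c. c L = i \<and> c (Suc L) = Suc L) / cpdens J p y q n L (\<lambda>c. c (Suc L) = Suc L)
          * cpdens J p y q n n (\<lambda>c. c (Suc L) = Suc L)
       = cpdens J p y q n n (\<lambda>c. c L = i \<and> c (Suc L) = Suc L)"
proof (cases "cpdens J p y q n L (\<lambda>c. c (Suc L) = Suc L) = 0")
  case False
  then show ?thesis using cross[where p=p and y=y and q=q and i=i, OF J L meas nn] by (simp add: field_simps)
next
  case True
  define SB where "SB = {c\<in>cpaths n. c (Suc L) = Suc L}"
  have lik2: "cplik J p y n n c = cplik J p y n L c * enn2real (X2 J p y n L c)"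
    and lik1: "cplik J p y n L c = enn2real (X1 J p y L c)"
    if "c (Suc L) = Suc L" for c
    using lik_split[where c=c and p=p and y=y and L=L, OF J L that] meas nn by auto
  have nnW: "0 \<le> cprior q n c * cplik J p y n L c" if "c \<in> SB" for c
    using that prior_nonneg[OF qb] lik1 by (auto simp: SB_def)
  have "(\<Sum>c\<in>SB. cprior q n c * cplik J p y n L c) = 0"
    using True unfolding cpdens_sum SB_def .
  then have z: "cprior q n c * cplik J p y n L c = 0" if "c \<in> SB" for c
  proof -
    have "finite SB" using finite_cpaths by (simp add: SB_def)
    then show ?thesis using sum_nonneg_eq_0_iff[of SB "\<lambda>c. cprior q n c * cplik J p y n L c"] nnW that
      \<open>(\<Sum>c\<in>SB. cprior q n c * cplik J p y n L c) = 0\<close> by blast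
  qed
  have "cpdens J p y q n n (\<lambda>c. c L = i \<and> c (Suc L) = Suc L) = 0"
    unfolding cpdens_sum
  proof (intro sum.neutral ballI)
    fix c assume c: "c \<in> {c \<in> cpaths n. c L = i \<and> c (Suc L) = Suc L}"
    then have "c \<in> SB" by (auto simp: SB_def)
    then show "cprior q n c * cplik J p y n n c = 0"
      using z[of c] lik2[of c] c by auto
  qed
  then show ?thesis using True by simp
qed


theorem mainTheorem9:
  fixes J :: "'x measure" and \<psi> :: "'y measure"
    and p :: "nat \<Rightarrow> 'x \<Rightarrow> 'y \<Rightarrow> real" and q :: "nat \<Rightarrow> nat \<Rightarrow> real"
    and y :: "nat \<Rightarrow> 'y" and n i :: nat
  assumes "n \<ge> 1"
    and "prob_space J"
    and "sigma_finite_measure \<psi>"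
    and "\<forall>j i. j < i \<and> i \<le> n \<longrightarrow> 0 \<le> q j i \<and> q j i \<le> 1"
    and "\<forall>l. (\<lambda>(x, v). p l x v) \<in> borel_measurable (J \<Otimes>\<^sub>M \<psi>)"
    and "\<forall>l. \<forall>x\<in>space J. (\<forall>v\<in>space \<psi>. 0 \<le> p l x v)
                         \<and> (\<integral>\<^sup>+ v. ennreal (p l x v) \<partial>\<psi>) = 1"
    and "\<forall>l\<in>{1..n}. y l \<in> space \<psi>"
    and "\<forall>j i. 0 < j \<and> j \<le> i \<and> i \<le> n \<longrightarrow>
            0 < (\<integral>x. (\<Prod>l\<in>{j..i}. p l x (y l)) \<partial>J)"
    and "0 < i" and "i \<le> n"
  shows "qtilde J p y q n i =
           (\<Sum>l\<in>{i..n-1}. ctilde J p y q n i l * qtilde J p y q n (l + 1))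
           + ctilde J p y q n i n"
proof -
  note J = assms(2) and qb = assms(4)
  have meas: "(\<lambda>x. p l x (y l)) \<in> borel_measurable J" if "l \<in> {1..n}" for l
  proof -
    have yl: "y l \<in> space \<psi>" using assms(7) that by auto
    show ?thesis
      using measurable_comp[OF measurable_Pair2'[OF yl, of J], of "\<lambda>(x,v). p l x v" borel] assms(5)
      by (simp add: comp_def)
  qed
  have nn: "0 \<le> p l x (y l)" if "l \<in> {1..n}" "x \<in> space J" for l x
    using assms(6,7) that by auto
  define D where "D = (\<lambda>E. cpdens J p y q n n E)"
  define Z where "Z = D (\<lambda>_. True)"
  define W where "W = (\<lambda>c. cprior q n c * cplik J p y n n c)"
  have ni: "{i..n-1} = {i..<n}" using assms(1) by auto
  have part: "D (\<lambda>c. c i = i) = (\<Sum>l\<in>{i..<n}. D (\<lambda>c. c l = i \<and> c (Suc l) = Suc l)) + D (\<lambda>c. c n = i)"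
  proof -
    have "(\<Sum>l\<in>{i..<n}. D (\<lambda>c. c l = i \<and> c (Suc l) = Suc l)) + D (\<lambda>c. c n = i)
       = (\<Sum>c\<in>cpaths n. (\<Sum>l\<in>{i..<n}. if c l = i \<and> c (Suc l) = Suc l then W c else 0)
            + (if c n = i then W c else 0))"
      unfolding D_def cpdens_def W_def by (simp add: sum.distrib sum.swap[of _ "{i..<n}"])
    also have "\<dots> = (\<Sum>c\<in>cpaths n. if c i = i then W c else 0)"
    proof (intro sum.cong refl)
      fix c assume c: "c \<in> cpaths n"
      show "(\<Sum>l\<in>{i..<n}. if c l = i \<and> c (Suc l) = Suc l then W c else 0)
            + (if c n = i then W c else 0) = (if c i = i then W c else 0)"
      proof (cases "cprior q n c = 0")
        case True then have "W c = 0" by (simp add: W_def)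
        then show ?thesis by (auto intro!: sum.neutral)
      next
        case False
        then have "\<forall>k\<in>{1..n}. c k = k \<or> c k = c (k - 1)" using valid_of_prior by blast
        then show ?thesis using partition_path[where w="W c", OF c _ _ assms(10) order_refl] assms(9) by auto
      qed
    qed
    finally show ?thesis unfolding D_def cpdens_def W_def by simp
  qed
  have step: "ctilde J p y q n i l * qtilde J p y q n (l + 1) = D (\<lambda>c. c l = i \<and> c (Suc l) = Suc l) / Z"
    if "l \<in> {i..<n}" for l
  proof -
    have L: "l < n" using that by auto
    have "ctilde J p y q n i l * qtilde J p y q n (l + 1)
        = cpdens J p y q n l (\<lambda>c. c l = i \<and> c (Suc l) = Suc l) / cpdens J p y q n l (\<lambda>c. c (Suc l) = Suc l)
          * cpdens J p y q n n (\<lambda>c. c (Suc l) = Suc l) / Z"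
      using L by (simp add: ctilde_def qtilde_def Z_def D_def)
    also have "\<dots> = D (\<lambda>c. c l = i \<and> c (Suc l) = Suc l) / Z"
      using ctilde_step[where p=p and y=y and q=q and i=i, OF J L meas nn qb] by (simp add: D_def)
    finally show ?thesis .
  qed
  have "(\<Sum>l\<in>{i..n-1}. ctilde J p y q n i l * qtilde J p y q n (l + 1)) + ctilde J p y q n i n
      = (\<Sum>l\<in>{i..<n}. D (\<lambda>c. c l = i \<and> c (Suc l) = Suc l) / Z) + D (\<lambda>c. c n = i) / Z"
    unfolding ni using step by (simp add: ctilde_def D_def Z_def)
  also have "\<dots> = D (\<lambda>c. c i = i) / Z"
    unfolding part by (simp add: sum_divide_distrib add_divide_distrib)
  finally show ?thesis by (simp add: qtilde_def D_def Z_def)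
qed

end
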